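(* For all complex $q$ with $|q|<1$, $$\sum_{n=0}^\infty \frac{q^{n^2+n}}{(-q;q)_n^2(1+q^{n+1})}=\frac{2}{(q;q)_\infty}\sum_{n=0}^\infty\frac{(-1)^n q^{\frac{3n(n+1)}{2}}(1-q^{2n+1})}{(1+q^n)(1+q^{n+1})}=\frac{2}{(q;q)_\infty}\sum_{n\in\mathbb Z}\frac{(-1)^n q^{\frac{3n(n+1)}{2}}}{1+q^n}.$$
   Context: For $n\in\mathbb N_0\cup\{\infty\}$, $(a;q)_n:=\prod_{j=0}^{n-1}(1-aq^j)$. *)

theory Defs
  imports "HOL-Analysis.Analysis"
begin

definition qpoch :: "complex \<Rightarrow> complex \<Rightarrow> nat \<Rightarrow> complex" where
  "qpoch a q n = (\<Prod>j<n. 1 - a * q ^ j)"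

definition qpoch_inf :: "complex \<Rightarrow> complex \<Rightarrow> complex" where
  "qpoch_inf a q = (\<Prod>j. 1 - a * q ^ j)"

end

theory Submission
  imports Defs
begin

lemma qpoch_0[simp]: "qpoch a q 0 = 1" by (simp add: qpoch_def)
lemma qpoch_Suc: "qpoch a q (Suc n) = qpoch a q n * (1 - a * q ^ n)"
  by (simp add: qpoch_def)
lemma qpoch_Suc': "qpoch a q (Suc n) = (1 - a) * qpoch (a*q) q n"
  unfolding qpoch_def by (subst prod.lessThan_Suc_shift) (simp add: mult.assoc)

lemma qpoch_nz:
  fixes q :: complex assumes "norm q \<le> 1" "norm a < 1"
  shows "qpoch a q n \<noteq> 0"
proof -
  have "a * q ^ j \<noteq> 1" for j
  proof
    assume h: "a * q ^ j = 1"
    have "norm (a*q^j) < 1"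
    proof -
      have "norm (q^j) \<le> 1" using assms(1) by (simp add: norm_power power_le_one)
      hence "norm a * norm (q^j) < 1" using assms(2)
        by (metis mult_left_le norm_ge_zero order.strict_trans1)
      thus ?thesis by (simp add: norm_mult)
    qed
    thus False using h by simp
  qed
  thus ?thesis unfolding qpoch_def by simp
qed


definition tri :: "nat \<Rightarrow> nat" where "tri k = k * (k + 1) div 2"

lemma tri_Suc: "tri (Suc i) = tri i + Suc i"
proof -
  have "Suc i * (Suc i + 1) = i * (i + 1) + 2 * Suc i" by (simp add: algebra_simps)
  thus ?thesis unfolding tri_def by simp
qed

lemma tri2: "2 * tri k = k * (k + 1)"
  unfolding tri_def by simp

definition Wt :: "complex \<Rightarrow> nat \<Rightarrow> nat \<Rightarrow> complex \<Rightarrow> nat \<Rightarrow> complex" where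
  "Wt q N d z j = (-1)^j * q^(tri j) / (q^(j*d) * qpoch q q j * qpoch q q (N-j) * (1 - z*q^j))"

lemma qpoch_qq_Suc: "qpoch q q (Suc n) = qpoch q q n * (1 - q^Suc n)"
  by (simp add: qpoch_Suc)

lemma alg_mid:
  fixes s T D E A B x y z :: complex
  assumes "D \<noteq> 0" "E \<noteq> 0" "A \<noteq> 0" "B \<noteq> 0" "1 - x \<noteq> 0" "1 - y \<noteq> 0" "1 - x*y \<noteq> 0" "1 - z*x \<noteq> 0"
  shows "(-s)*(T*x) / ((D*E)*(A*(1-x)) * (B*(1-y)) * (1 - z*x)) =
     (-s)*(T*x) / ((D*E)*(A*(1-x)) * B * (1 - z*x)) / (1 - x*y) + 
     - (x*y/D * (s*T / (E * A * (B*(1-y)) * (1 - z*x))) / (1 - x*y))"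
proof -
  have "(-s)*(T*x) / ((D*E)*(A*(1-x)) * B * (1 - z*x)) / (1 - x*y) + 
     - (x*y/D * (s*T / (E * A * (B*(1-y)) * (1 - z*x))) / (1 - x*y))
   = (-s)*(T*x) / ((D*E)*A * B * (1 - z*x)) * (1/((1-x)*(1-x*y)) + y/((1-y)*(1-x*y)))"
    using assms by (simp add: divide_simps) (simp add: algebra_simps)
  also have "1/((1-x)*(1-x*y)) + y/((1-y)*(1-x*y)) = 1/((1-x)*(1-y))"
    using assms by (simp add: divide_simps) (simp add: algebra_simps)
  finally show ?thesis using assms by (simp add: divide_simps)
qed
lemma alg_last:
  fixes s T D E A x z :: complex
  assumes "D \<noteq> 0" "E \<noteq> 0" "A \<noteq> 0" "1 - x \<noteq> 0" "1 - z*x \<noteq> 0"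
  shows "(-s)*(T*x) / ((D*E)*(A*(1-x)) * (1 - z*x)) = 0 + 
     - (x/D * (s*T / (E * A * (1 - z*x))) / (1 - x))"
  using assms by (simp add: divide_simps)

lemma Wt_step1:
  fixes q z :: complex
  assumes nz: "\<And>n. qpoch q q n \<noteq> 0" and q0: "q \<noteq> 0"
    and zc: "\<And>j. j \<le> Suc N \<Longrightarrow> z * q^j \<noteq> 1" and d: "d \<le> N" and j: "j \<le> Suc N"
  shows "Wt q (Suc N) d z j = (if j \<le> N then Wt q N d z j / (1 - q^Suc N) else 0)
          + (if j = 0 then 0 else - (q^(Suc N - d) * Wt q N d (z*q) (j-1) / (1 - q^Suc N)))"
proof -
  have qN: "1 - q^Suc N \<noteq> 0" using nz[of "Suc N"] by (auto simp: qpoch_qq_Suc)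
  have qpS: "\<And>n. qpoch q q (Suc n) = qpoch q q n * (1 - q^Suc n)" by (rule qpoch_qq_Suc)
  have fac: "\<And>n. 1 - q^Suc n \<noteq> 0" using nz by (metis mult_zero_right qpS)
  have qd: "q^(Suc N - d) = q^Suc N / q^d" using d q0 by (simp add: power_diff)
  show ?thesis
  proof (cases j)
    case 0
    have z1: "1 - z \<noteq> 0" using zc[of 0] by auto
    show ?thesis using 0 nz[of N] qN z1
      by (simp add: Wt_def tri_def qpS field_simps)
  next
    case (Suc i)
    have zi: "1 - z * q^Suc i \<noteq> 0" using zc[of "Suc i"] j Suc by auto
    define s where "s = ((-1)^i :: complex)"
    define T where "T = q^tri i"
    define D where "D = q^d"
    define E where "E = q^(i*d)"
    define A where "A = qpoch q q i"
    define x where "x = q^Suc i"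
    have D0: "D \<noteq> 0" "E \<noteq> 0" using q0 by (auto simp: D_def E_def)
    have A0: "A \<noteq> 0" using nz by (simp add: A_def)
    have x1: "1 - x \<noteq> 0" using fac[of i] by (simp add: x_def)
    have zx: "1 - z*x \<noteq> 0" using zi by (simp add: x_def)
    have L0: "Wt q (Suc N) d z j = (-s)*(T*x) / ((D*E)*(A*(1-x)) * qpoch q q (N - i) * (1 - z*x))"
      unfolding Wt_def Suc by (simp add: s_def T_def D_def E_def A_def x_def tri_Suc qpS power_add mult_ac)
    show ?thesis
    proof (cases "i < N")
      case True
      define B where "B = qpoch q q (N - Suc i)"
      define y where "y = q^(N - i)"
      have e1: "N - i = Suc (N - Suc i)" using True by simp
      have e2: "q^Suc N = x * y" using True by (simp add: x_def y_def flip: power_add)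
      have B0: "B \<noteq> 0" using nz by (simp add: B_def)
      have y1: "1 - y \<noteq> 0" using fac e1 by (metis y_def)
      have xy1: "1 - x*y \<noteq> 0" using fac[of N] e2 by simp
      have qNi: "qpoch q q (N - i) = B * (1 - y)" unfolding B_def y_def by (subst e1, subst qpS, simp add: e1)
      have L: "Wt q (Suc N) d z j = (-s)*(T*x) / ((D*E)*(A*(1-x)) * (B*(1-y)) * (1 - z*x))"
        using L0 qNi by simp
      have R1: "Wt q N d z j = (-s)*(T*x) / ((D*E)*(A*(1-x)) * B * (1 - z*x))"
        unfolding Wt_def Suc by (simp add: s_def T_def D_def E_def A_def x_def B_def tri_Suc qpS power_add mult_ac)
      have R2: "Wt q N d (z*q) (j-1) = s*T / (E * A * (B*(1-y)) * (1 - z*x))"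
        unfolding Wt_def Suc by (simp add: s_def T_def E_def A_def x_def qNi[symmetric] mult_ac)
      have R3: "q^(Suc N - d) = x*y/D" using qd e2 D_def by simp
      have c: "j \<le> N" "j \<noteq> 0" using True Suc by auto
      show ?thesis unfolding L R1 R2 R3 e2 if_P[OF c(1)] if_not_P[OF c(2)]
        by (rule alg_mid[OF D0 A0 B0 x1 y1 xy1 zx])
    next
      case False
      hence iN: "i = N" using j Suc by simp
      have L: "Wt q (Suc N) d z j = (-s)*(T*x) / ((D*E)*(A*(1-x)) * (1 - z*x))"
        using L0 iN by simp
      have R2: "Wt q N d (z*q) (j-1) = s*T / (E * A * (1 - z*x))"
        unfolding Wt_def Suc iN by (simp add: s_def T_def E_def A_def x_def iN mult_ac)
      have R3: "q^(Suc N - d) = x/D" using qd D_def x_def iN by simp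
      have ex: "q^Suc N = x" using iN x_def by simp
      have c: "\<not> j \<le> N" "j \<noteq> 0" using iN Suc by auto
      show ?thesis unfolding L R2 R3 if_not_P[OF c(1)] if_not_P[OF c(2)] ex
        by (rule alg_last[OF D0 A0 x1 zx])
    qed
  qed
qed


lemma alg_mid2:
  fixes s T G Q A B x y z :: complex
  assumes "G \<noteq> 0" "Q \<noteq> 0" "A \<noteq> 0" "B \<noteq> 0" "x \<noteq> 0" "1 - x \<noteq> 0" "1 - y \<noteq> 0" "1 - x*y \<noteq> 0" "1 - z*x \<noteq> 0"
  shows "(-s)*(T*x) / ((G*Q*x)*(A*(1-x)) * (B*(1-y)) * (1 - z*x)) =
     (-s)*(T*x) / ((G*Q)*(A*(1-x)) * B * (1 - z*x)) / (1 - x*y) + 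
     - ((s*T / (G * A * (B*(1-y)) * (1 - z*x))) / Q / (1 - x*y))"
proof -
  have "(-s)*(T*x) / ((G*Q)*(A*(1-x)) * B * (1 - z*x)) / (1 - x*y) + 
     - ((s*T / (G * A * (B*(1-y)) * (1 - z*x))) / Q / (1 - x*y))
   = (-s)*T / ((G*Q)*A * B * (1 - z*x)) * (x/((1-x)*(1-x*y)) + 1/((1-y)*(1-x*y)))"
    using assms by (simp add: divide_simps) (simp add: algebra_simps)
  also have "x/((1-x)*(1-x*y)) + 1/((1-y)*(1-x*y)) = 1/((1-x)*(1-y))"
    using assms by (simp add: divide_simps) (simp add: algebra_simps)
  finally show ?thesis using assms by (simp add: divide_simps)
qed

lemma alg_last2:
  fixes s T G Q A x z :: complex
  assumes "G \<noteq> 0" "Q \<noteq> 0" "A \<noteq> 0" "x \<noteq> 0" "1 - x \<noteq> 0" "1 - z*x \<noteq> 0"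
  shows "(-s)*(T*x) / ((G*Q*x)*(A*(1-x)) * (1 - z*x)) = 0 + 
     - ((s*T / (G * A * (1 - z*x))) / Q / (1 - x))"
  using assms by (simp add: divide_simps)

lemma Wt_step2:
  fixes q z :: complex
  assumes nz: "\<And>n. qpoch q q n \<noteq> 0" and q0: "q \<noteq> 0"
    and zc: "\<And>j. j \<le> Suc N \<Longrightarrow> z * q^j \<noteq> 1" and j: "j \<le> Suc N"
  shows "Wt q (Suc N) (Suc N) z j = (if j \<le> N then Wt q N N z j / (1 - q^Suc N) else 0)
          + (if j = 0 then 0 else - (Wt q N N (z*q) (j-1) / q^N / (1 - q^Suc N)))"
proof -
  have qN: "1 - q^Suc N \<noteq> 0" using nz[of "Suc N"] by (auto simp: qpoch_qq_Suc)
  have qpS: "\<And>n. qpoch q q (Suc n) = qpoch q q n * (1 - q^Suc n)" by (rule qpoch_qq_Suc)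
  have fac: "\<And>n. 1 - q^Suc n \<noteq> 0" using nz by (metis mult_zero_right qpS)
  show ?thesis
  proof (cases j)
    case 0
    have z1: "1 - z \<noteq> 0" using zc[of 0] by auto
    show ?thesis using 0 nz[of N] qN z1
      by (simp add: Wt_def tri_def qpS field_simps)
  next
    case (Suc i)
    have zi: "1 - z * q^Suc i \<noteq> 0" using zc[of "Suc i"] j Suc by auto
    define s where "s = ((-1)^i :: complex)"
    define T where "T = q^tri i"
    define G where "G = q^(i*N)"
    define Q where "Q = q^N"
    define A where "A = qpoch q q i"
    define x where "x = q^Suc i"
    have D0: "G \<noteq> 0" "Q \<noteq> 0" "x \<noteq> 0" using q0 by (auto simp: G_def Q_def x_def)
    have A0: "A \<noteq> 0" using nz by (simp add: A_def)
    have x1: "1 - x \<noteq> 0" using fac[of i] by (simp add: x_def)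
    have zx: "1 - z*x \<noteq> 0" using zi by (simp add: x_def)
    have ex1: "q^(Suc i * Suc N) = G*Q*x"
    proof -
      have "Suc i * Suc N = i*N + N + Suc i" by (simp add: algebra_simps)
      thus ?thesis by (simp add: G_def Q_def x_def power_add)
    qed
    have ex2: "q^(Suc i * N) = G*Q"
    proof -
      have "Suc i * N = i*N + N" by (simp add: algebra_simps)
      thus ?thesis by (simp add: G_def Q_def power_add)
    qed
    have L0: "Wt q (Suc N) (Suc N) z j = (-s)*(T*x) / ((G*Q*x)*(A*(1-x)) * qpoch q q (N - i) * (1 - z*x))"
      unfolding Wt_def Suc ex1 by (simp add: s_def T_def A_def x_def tri_Suc qpS power_add mult_ac)
    show ?thesis
    proof (cases "i < N")
      case True
      define B where "B = qpoch q q (N - Suc i)"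
      define y where "y = q^(N - i)"
      have e1: "N - i = Suc (N - Suc i)" using True by simp
      have e2: "q^Suc N = x * y" using True by (simp add: x_def y_def flip: power_add)
      have B0: "B \<noteq> 0" using nz by (simp add: B_def)
      have y1: "1 - y \<noteq> 0" using fac e1 by (metis y_def)
      have xy1: "1 - x*y \<noteq> 0" using fac[of N] e2 by simp
      have qNi: "qpoch q q (N - i) = B * (1 - y)" unfolding B_def y_def by (subst e1, subst qpS, simp add: e1)
      have L: "Wt q (Suc N) (Suc N) z j = (-s)*(T*x) / ((G*Q*x)*(A*(1-x)) * (B*(1-y)) * (1 - z*x))"
        using L0 qNi by simp
      have R1: "Wt q N N z j = (-s)*(T*x) / ((G*Q)*(A*(1-x)) * B * (1 - z*x))"
        unfolding Wt_def Suc ex2 by (simp add: s_def T_def A_def x_def B_def tri_Suc qpS power_add mult_ac)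
      have R2: "Wt q N N (z*q) (j-1) = s*T / (G * A * (B*(1-y)) * (1 - z*x))"
        unfolding Wt_def Suc by (simp add: s_def T_def G_def A_def x_def qNi[symmetric] mult_ac)
      have c: "j \<le> N" "j \<noteq> 0" using True Suc by auto
      show ?thesis unfolding L R1 R2 e2 if_P[OF c(1)] if_not_P[OF c(2)] Q_def[symmetric]
        by (rule alg_mid2[OF D0(1) D0(2) A0 B0 D0(3) x1 y1 xy1 zx])
    next
      case False
      hence iN: "i = N" using j Suc by simp
      have L: "Wt q (Suc N) (Suc N) z j = (-s)*(T*x) / ((G*Q*x)*(A*(1-x)) * (1 - z*x))"
        using L0 iN by simp
      have R2: "Wt q N N (z*q) (j-1) = s*T / (G * A * (1 - z*x))"
        unfolding Wt_def Suc iN by (simp add: s_def T_def G_def A_def x_def iN mult_ac)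
      have ex: "q^Suc N = x" using iN x_def by simp
      have c: "\<not> j \<le> N" "j \<noteq> 0" using iN Suc by auto
      show ?thesis unfolding L R2 if_not_P[OF c(1)] if_not_P[OF c(2)] ex Q_def[symmetric]
        by (rule alg_last2[OF D0(1) D0(2) A0 D0(3) x1 zx])
    qed
  qed
qed


lemma sum_split_if:
  "(\<Sum>j\<le>Suc N. (if j \<le> N then a j else 0) + (if j = 0 then 0 else b (j-1))) =
   (\<Sum>j\<le>N. a j) + (\<Sum>j\<le>N. (b j :: complex))"
proof -
  have 1: "(\<Sum>j\<le>Suc N. (if j \<le> N then a j else 0)) = (\<Sum>j\<le>N. a j)"
    by (simp add: sum.atMost_Suc)
  have 2: "(\<Sum>j\<le>Suc N. (if j = 0 then 0 else b (j-1))) = (\<Sum>j\<le>N. b j)"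
    by (simp only: sum.atMost_Suc_shift) simp
  show ?thesis by (simp only: sum.distrib 1 2)
qed

lemma W_identity:
  fixes q z :: complex
  assumes nz: "\<And>n. qpoch q q n \<noteq> 0" and q0: "q \<noteq> 0"
    and zc: "\<And>j. j \<le> N \<Longrightarrow> z * q^j \<noteq> 1" and d: "d \<le> N"
  shows "(\<Sum>j\<le>N. Wt q N d z j) = z^d / qpoch z q (Suc N)"
  using zc d
proof (induction N arbitrary: z d)
  case 0
  then show ?case by (simp add: Wt_def tri_def qpoch_def)
next
  case (Suc N)
  have qN: "1 - q^Suc N \<noteq> 0" using nz[of "Suc N"] by (auto simp: qpoch_qq_Suc)
  have zq: "\<And>j. j \<le> N \<Longrightarrow> z * q * q^j \<noteq> 1"
    using Suc.prems(1) by (metis Suc_le_mono mult.assoc power_Suc)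
  have z1: "1 - z \<noteq> 0" using Suc.prems(1)[of 0] by auto
  have zN: "1 - z*q*q^N \<noteq> 0" using Suc.prems(1)[of "Suc N"] by (auto simp: mult.assoc)
  have P: "qpoch (z*q) q N \<noteq> 0"
    unfolding qpoch_def using zq by (auto simp: prod_zero_iff)
  have pz: "qpoch z q (Suc (Suc N)) = (1 - z) * (qpoch (z*q) q N * (1 - z*q*q^N))"
    unfolding qpoch_Suc'[of z q "Suc N"] qpoch_Suc[of "z*q" q N] ..
  have pz1: "qpoch z q (Suc N) = (1 - z) * qpoch (z*q) q N"
    by (simp add: qpoch_Suc')
  have pz2: "qpoch (z*q) q (Suc N) = qpoch (z*q) q N * (1 - z*q*q^N)"
    by (simp add: qpoch_Suc)
  show ?case
  proof (cases "d \<le> N")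
    case True
    have "(\<Sum>j\<le>Suc N. Wt q (Suc N) d z j) = (\<Sum>j\<le>Suc N.
          (if j \<le> N then Wt q N d z j / (1 - q^Suc N) else 0)
          + (if j = 0 then 0 else - (q^(Suc N - d) * Wt q N d (z*q) (j-1) / (1 - q^Suc N))))"
      by (rule sum.cong[OF refl], rule Wt_step1[OF nz q0 Suc.prems(1) True]) auto
    also have "\<dots> = (\<Sum>j\<le>N. Wt q N d z j / (1 - q^Suc N)) +
       (\<Sum>j\<le>N. - (q^(Suc N - d) * Wt q N d (z*q) j / (1 - q^Suc N)))"
      by (rule sum_split_if)
    also have "\<dots> = ((\<Sum>j\<le>N. Wt q N d z j) - q^(Suc N - d) * (\<Sum>j\<le>N. Wt q N d (z*q) j)) / (1 - q^Suc N)"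
      by (simp add: sum_divide_distrib sum_distrib_left sum_negf diff_divide_distrib)
    also have "\<dots> = (z^d / qpoch z q (Suc N) - q^(Suc N - d) * ((z*q)^d / qpoch (z*q) q (Suc N))) / (1 - q^Suc N)"
      using Suc.IH[OF _ True] Suc.prems zq by (simp add: Suc.IH[OF zq True])
    also have "\<dots> = z^d / qpoch z q (Suc (Suc N))"
    proof -
      have e': "q^d * q^(Suc N - d) = q^Suc N" using True by (simp flip: power_add)
      have e3: "q ^ d * (z ^ d * q ^ (Suc N - d)) = q * (q ^ N * z ^ d)"
        by (metis e' mult.left_commute mult.commute power_Suc)
      have e: "q^(Suc N - d) * (z*q)^d = z^d * q^Suc N"
        using e' by (simp add: power_mult_distrib mult_ac)
      have "q^(Suc N - d) * ((z*q)^d / qpoch (z*q) q (Suc N)) = z^d * q^Suc N / qpoch (z*q) q (Suc N)"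
        using e by (simp add: mult.assoc[symmetric])
      thus ?thesis using qN z1 zN P unfolding pz pz1 pz2
        by (simp add: divide_simps) (simp add: algebra_simps e3)
    qed
    finally show ?thesis .
  next
    case False
    hence dN: "d = Suc N" using Suc.prems(2) by simp
    have "(\<Sum>j\<le>Suc N. Wt q (Suc N) d z j) = (\<Sum>j\<le>Suc N.
          (if j \<le> N then Wt q N N z j / (1 - q^Suc N) else 0)
          + (if j = 0 then 0 else - (Wt q N N (z*q) (j-1) / q^N / (1 - q^Suc N))))"
      unfolding dN by (rule sum.cong[OF refl], rule Wt_step2[OF nz q0 Suc.prems(1)]) auto
    also have "\<dots> = (\<Sum>j\<le>N. Wt q N N z j / (1 - q^Suc N)) +
       (\<Sum>j\<le>N. - (Wt q N N (z*q) j / q^N / (1 - q^Suc N)))"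
      by (rule sum_split_if)
    also have "\<dots> = ((\<Sum>j\<le>N. Wt q N N z j) - (\<Sum>j\<le>N. Wt q N N (z*q) j) / q^N) / (1 - q^Suc N)"
      by (simp add: sum_divide_distrib sum_negf diff_divide_distrib)
    also have "\<dots> = (z^N / qpoch z q (Suc N) - ((z*q)^N / qpoch (z*q) q (Suc N)) / q^N) / (1 - q^Suc N)"
      by (simp add: Suc.IH[OF _ order.refl] zq Suc.prems(1))
    also have "\<dots> = z^d / qpoch z q (Suc (Suc N))"
      using qN z1 zN P q0 unfolding pz pz1 pz2 dN
      by (simp add: divide_simps power_mult_distrib) (simp add: algebra_simps)
    finally show ?thesis .
  qed
qed


lemma split_sum_2n:
  fixes f :: "nat \<Rightarrow> 'a::comm_monoid_add"
  shows "(\<Sum>j\<le>2*n+1. f j) = (\<Sum>k\<le>n. f (n+1+k) + f (n-k))"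
proof -
  let ?m = "Suc n"
  have "(\<Sum>j\<le>2*n+1. f j) = (\<Sum>j\<in>{0..<?m+?m}. f j)"
    by (simp add: atLeast0LessThan lessThan_Suc_atMost[symmetric] mult_2)
  also have "\<dots> = (\<Sum>j\<in>{0..<?m}. f j) + (\<Sum>j\<in>{?m..<?m+?m}. f j)"
    by (rule sum.atLeastLessThan_concat[symmetric]) auto
  also have "(\<Sum>j\<in>{?m..<?m+?m}. f j) = (\<Sum>j\<in>{0..<?m}. f (j + ?m))"
    using sum.shift_bounds_nat_ivl[of f 0 ?m ?m] by simp
  also have "(\<Sum>j\<in>{0..<?m}. f j) = (\<Sum>j\<in>{0..<?m}. f (?m - Suc j))"
    unfolding atLeast0LessThan by (rule sum.nat_diff_reindex[symmetric])
  finally show ?thesis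
    by (simp add: sum.distrib atLeast0LessThan lessThan_Suc_atMost add.commute add.left_commute)
qed

lemma split_prod_2n:
  fixes f :: "nat \<Rightarrow> 'a::comm_monoid_mult"
  shows "(\<Prod>j\<le>2*n+1. f j) = (\<Prod>k\<le>n. f (n+1+k) * f (n-k))"
proof -
  let ?m = "Suc n"
  have "(\<Prod>j\<le>2*n+1. f j) = (\<Prod>j\<in>{0..<?m+?m}. f j)"
    by (simp add: atLeast0LessThan lessThan_Suc_atMost[symmetric] mult_2)
  also have "\<dots> = (\<Prod>j\<in>{0..<?m}. f j) * (\<Prod>j\<in>{?m..<?m+?m}. f j)"
    by (rule prod.atLeastLessThan_concat[symmetric]) auto
  also have "(\<Prod>j\<in>{?m..<?m+?m}. f j) = (\<Prod>j\<in>{0..<?m}. f (j + ?m))"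
    using prod.shift_bounds_nat_ivl[of f 0 ?m ?m] by simp
  also have "(\<Prod>j\<in>{0..<?m}. f j) = (\<Prod>j\<in>{0..<?m}. f (?m - Suc j))"
    unfolding atLeast0LessThan by (rule prod.nat_diff_reindex[symmetric])
  finally show ?thesis
    by (simp add: prod.distrib atLeast0LessThan lessThan_Suc_atMost mult.commute add.commute add.left_commute)
qed

lemma tri_0[simp]: "tri 0 = 0" by (simp add: tri_def)

lemma prod_qpow_tri: "(\<Prod>k<m. (q::complex)^Suc k) = q^tri m"
  by (induction m) (simp_all add: tri_Suc power_add mult.commute)

lemma tri_eq1: "tri (n+1+k) + tri n = tri k + (n+1+k)*(n+1)"
proof -
  have "2 * (tri (n+1+k) + tri n) = 2 * (tri k + (n+1+k)*(n+1))"
    unfolding add_mult_distrib2 tri2 by (simp add: algebra_simps)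
  thus ?thesis by simp
qed

lemma tri_eq2: "k \<le> n \<Longrightarrow> tri (n-k) + tri n = tri k + (n-k)*(n+1)"
proof -
  assume "k \<le> n"
  then obtain m where m: "n = k + m" using le_Suc_ex by blast
  have "2 * (tri m + tri (k+m)) = 2 * (tri k + m*(k+m+1))"
    unfolding add_mult_distrib2 tri2 by (simp add: algebra_simps)
  thus ?thesis using m by simp
qed

lemma tri_eq3: "(n+1)*(n+1) = tri (n+1) + tri n"
proof -
  have "2 * ((n+1)*(n+1)) = 2 * (tri (n+1) + tri n)"
    unfolding add_mult_distrib2 tri2 by (simp add: algebra_simps)
  thus ?thesis by simp
qed


definition wq :: "complex \<Rightarrow> nat \<Rightarrow> complex" where
  "wq q k = (1 - q^(2*k+1)) / ((1 + q^k) * (1 + q^(k+1)))"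

lemma onep_nz: fixes q :: complex assumes "norm q < 1" shows "1 + q^k \<noteq> 0"
proof (cases k)
  case 0 then show ?thesis by simp
next
  case (Suc m)
  have "norm q ^ k < 1" using assms Suc power_less_one_iff[of "norm q" k] by simp
  hence "norm (q^k) < 1" by (simp add: norm_power)
  thus ?thesis by (metis add.inverse_unique norm_minus_cancel norm_one order.irrefl)
qed

lemma alg_pair:
  fixes s a B c e u q Y Y' :: complex
  assumes "B \<noteq> 0" "c \<noteq> 0" "e \<noteq> 0" "1 + u \<noteq> 0" "1 + q*u \<noteq> 0" "q \<noteq> 0" "u \<noteq> 0" "Y \<noteq> 0" "Y' \<noteq> 0"
  shows "s*t * (a*Y/B) / (Y*e*c*(1+u)) + (-(s*t)) * (a*Y'/B) / (Y'*c*e*(1 + 1/(q*u)))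
       = s/B * (t * a * ((1 - q*u^2)/((1+u)*(1+q*u))) / (c*e))"
proof -
  have "1 + 1/(q*u) = (1 + q*u)/(q*u)" using assms by (simp add: field_simps)
  then show ?thesis using assms by (simp add: divide_simps) (simp add: algebra_simps power2_eq_square)
qed

lemma PF:
  fixes q :: complex assumes r: "norm q < 1" and q0: "q \<noteq> 0"
  shows "(\<Sum>k\<le>n. (-1)^k * q^tri k * wq q k / (qpoch q q (n-k) * qpoch q q (n+k+1)))
       = 1 / (2 * qpoch (-q) q n * qpoch (-q) q (Suc n))"
proof -
  define z where "z = -1/q^(n+1)"
  have nz: "\<And>m. qpoch q q m \<noteq> 0" by (rule qpoch_nz) (use r in auto)
  have nzm: "\<And>m. qpoch (-q) q m \<noteq> 0" by (rule qpoch_nz) (use r in auto)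
  have pk: "\<And>k. 1 + q^k \<noteq> 0" by (rule onep_nz[OF r])
  have zc: "z * q^j \<noteq> 1" for j
  proof
    assume "z * q^j = 1"
    hence h: "-(q^j) = q^(n+1)" using q0 unfolding z_def by (simp add: field_simps)
    hence "norm (q^(n+1)) = norm (-(q^j))" by simp
    hence "norm q ^ j = norm q ^ (n+1)" by (simp only: norm_power norm_minus_cancel)
    moreover have "0 < norm q" using q0 by simp
    ultimately have "j = n+1" using r
      by (metis linorder_neqE_nat order_less_irrefl power_strict_decreasing)
    thus False using h q0 by simp
  qed
  have W: "(\<Sum>j\<le>2*n+1. Wt q (2*n+1) (n+1) z j) = z^(n+1) / qpoch z q (Suc (2*n+1))"
    by (rule W_identity[OF nz q0 zc]) simp
  have trm: "Wt q (2*n+1) (n+1) z (n+1+k) + Wt q (2*n+1) (n+1) z (n-k) =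
     (-1)^(n+1)/q^tri n * ((-1)^k * q^tri k * wq q k / (qpoch q q (n-k) * qpoch q q (n+k+1)))"
    if k: "k \<le> n" for k
  proof -
    define Y where "Y = q^((n+1+k)*(n+1))"
    define Y' where "Y' = q^((n-k)*(n+1))"
    have e1: "q^tri (n+1+k) = q^tri k * Y / q^tri n"
      using tri_eq1[of n k] q0 unfolding Y_def by (simp add: field_simps flip: power_add)
    have e2: "q^tri (n-k) = q^tri k * Y' / q^tri n"
      using tri_eq2[OF k] q0 unfolding Y'_def by (simp add: field_simps flip: power_add)
    have s1: "(-1::complex)^(n+1+k) = (-1)^(n+1) * (-1)^k" by (simp add: power_add)
    have s2: "(-1::complex)^(n-k) = - ((-1)^(n+1) * (-1)^k)"
    proof -
      have sq: "((-1::complex)^k)^2 = 1"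
      proof -
        have "((-1::complex)^k)^2 = ((-1)^2)^k" by (simp only: power_mult[symmetric] mult.commute)
        thus ?thesis by simp
      qed
      have "(-1::complex)^(n-k) = (-1)^(n-k) * ((-1)^k)^2" by (simp only: sq mult_1_right)
      also have "\<dots> = (-1)^(n+k)"
      proof -
        have nk: "n - k + (k + k) = n + k" using k by simp
        show ?thesis by (simp only: power2_eq_square mult.assoc[symmetric] power_add[symmetric] nk)
      qed
      finally show ?thesis by (simp add: power_add)
    qed
    have d1: "2*n+1 - (n+1+k) = n-k" by simp
    have d2: "2*n+1 - (n-k) = n+1+k" using k by simp
    have z1: "1 - z*q^(n+1+k) = 1 + q^k" using q0 unfolding z_def by (simp add: power_add field_simps)
    have z2: "1 - z*q^(n-k) = 1 + 1/(q*q^k)"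
    proof -
      have "q^(n+1) = q^(n-k) * (q*q^k)" using k by (simp flip: power_add power_Suc)
      thus ?thesis using q0 unfolding z_def by (simp add: field_simps)
    qed
    have wq: "wq q k = (1 - q*(q^k)^2) / ((1+q^k)*(1+q*q^k))"
      unfolding wq_def by (simp add: power_mult[symmetric] mult.commute)
    have L: "Wt q (2*n+1) (n+1) z (n+1+k) + Wt q (2*n+1) (n+1) z (n-k) =
      (-1)^(n+1) * (-1)^k * (q^tri k*Y/q^tri n) / (Y * qpoch q q (n+1+k) * qpoch q q (n-k) * (1+q^k))
      + (- ((-1)^(n+1) * (-1)^k)) * (q^tri k*Y'/q^tri n) / (Y' * qpoch q q (n-k) * qpoch q q (n+1+k) * (1 + 1/(q*q^k)))"
      unfolding Wt_def e1 e2 s1 s2 d1 d2 z1 z2 Y_def Y'_def by (simp add: mult.commute)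
    have e3: "n+k+1 = n+1+k" by simp
    show ?thesis unfolding L wq e3
      by (rule alg_pair) (use q0 nz pk[of k] pk[of "Suc k"] in \<open>auto simp: Y_def Y'_def add.commute\<close>)
  qed
  have prodz: "qpoch z q (Suc (2*n+1)) = 2 * qpoch (-q) q n * qpoch (-q) q (Suc n) / q^tri (n+1)"
  proof -
    have "qpoch z q (Suc (2*n+1)) = (\<Prod>j\<le>2*n+1. 1 - z*q^j)"
      unfolding qpoch_def lessThan_Suc_atMost ..
    also have "\<dots> = (\<Prod>k\<le>n. (1 - z*q^(n+1+k)) * (1 - z*q^(n-k)))" by (rule split_prod_2n)
    also have "\<dots> = (\<Prod>k\<le>n. (1 + q^k) * ((1 + q^Suc k) / q^Suc k))"
    proof (rule prod.cong[OF refl])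
      fix k assume "k \<in> {..n}"
      hence k: "k \<le> n" by simp
      have "q^(n+1) = q^(n-k) * q^Suc k" using k by (simp flip: power_add)
      thus "(1 - z*q^(n+1+k)) * (1 - z*q^(n-k)) = (1 + q^k) * ((1 + q^Suc k) / q^Suc k)"
        using q0 unfolding z_def by (simp add: field_simps power_add)
    qed
    also have "\<dots> = (\<Prod>k\<le>n. 1 + q^k) * ((\<Prod>k<Suc n. 1 + q^Suc k) / (\<Prod>k<Suc n. q^Suc k))"
      by (simp add: prod.distrib prod_dividef lessThan_Suc_atMost)
    also have "(\<Prod>k\<le>n. 1 + q^k) = 2 * qpoch (-q) q n"
      unfolding qpoch_def lessThan_Suc_atMost[symmetric] prod.lessThan_Suc_shift by simp
    also have "(\<Prod>k<Suc n. 1 + q^Suc k) = qpoch (-q) q (Suc n)"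
      unfolding qpoch_def by simp
    also have "(\<Prod>k<Suc n. q^Suc k) = q^tri (n+1)" using prod_qpow_tri[of q "Suc n"] by simp
    finally show ?thesis by simp
  qed
  have zp: "z^(n+1) = (-1)^(n+1) / (q^tri (n+1) * q^tri n)"
  proof -
    have "z^(n+1) = (-1)^(n+1) / (q^(n+1))^(n+1)" unfolding z_def by (rule power_divide)
    also have "(q^(n+1))^(n+1) = q^tri (n+1) * q^tri n" by (subst power_mult[symmetric], subst tri_eq3, rule power_add)
    finally show ?thesis .
  qed
  define c :: complex where "c = (-1)^(n+1)/q^tri n"
  have c0: "c \<noteq> 0" using q0 by (simp add: c_def)
  have "c * (\<Sum>k\<le>n. (-1)^k * q^tri k * wq q k / (qpoch q q (n-k) * qpoch q q (n+k+1)))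
     = (\<Sum>k\<le>n. Wt q (2*n+1) (n+1) z (n+1+k) + Wt q (2*n+1) (n+1) z (n-k))"
    unfolding c_def sum_distrib_left by (rule sum.cong[OF refl], rule trm[symmetric]) auto
  also have "\<dots> = (\<Sum>j\<le>2*n+1. Wt q (2*n+1) (n+1) z j)"
    by (rule split_sum_2n[symmetric])
  also have "\<dots> = c * (1 / (2 * qpoch (-q) q n * qpoch (-q) q (Suc n)))"
    unfolding W prodz zp c_def using q0 nzm by (simp add: field_simps)
  finally show ?thesis using mult_left_cancel[OF c0] by blast
qed


lemma conv_prod_real:
  fixes r :: real assumes "0 \<le> r" "r < 1"
  shows "convergent_prod (\<lambda>j. 1 - r^Suc j)"
proof (rule abs_convergent_prod_imp_convergent_prod)
  have "summable (\<lambda>j. r^Suc j)" using assms by (simp add: summable_mult)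
  thus "abs_convergent_prod (\<lambda>j. 1 - r^Suc j)"
    unfolding abs_convergent_prod_conv_summable using assms by simp
qed

lemma conv_prod_cplx:
  fixes q :: complex assumes "norm q < 1"
  shows "convergent_prod (\<lambda>j. 1 - q * q^j)"
proof (rule abs_convergent_prod_imp_convergent_prod)
  have "summable (\<lambda>j. norm q * norm q^j)" using assms by (simp add: summable_mult)
  thus "abs_convergent_prod (\<lambda>j. 1 - q * q^j)"
    unfolding abs_convergent_prod_conv_summable by (simp add: norm_mult norm_power)
qed

lemma qpoch_lim:
  fixes q :: complex assumes "norm q < 1"
  shows "(\<lambda>n. qpoch q q n) \<longlonglongrightarrow> qpoch_inf q q" and "qpoch_inf q q \<noteq> 0"
proof -
  have c: "convergent_prod (\<lambda>j. 1 - q * q^j)" by (rule conv_prod_cplx[OF assms])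
  have "(\<lambda>n. \<Prod>i\<le>n. 1 - q * q^i) \<longlonglongrightarrow> qpoch_inf q q"
    unfolding qpoch_inf_def by (rule convergent_prod_LIMSEQ[OF c])
  hence "(\<lambda>n. qpoch q q (Suc n)) \<longlonglongrightarrow> qpoch_inf q q"
    unfolding qpoch_def lessThan_Suc_atMost .
  thus "(\<lambda>n. qpoch q q n) \<longlonglongrightarrow> qpoch_inf q q" by (rule LIMSEQ_imp_Suc)
  have "\<And>i. 1 - q * q^i \<noteq> 0"
    using qpoch_nz[of q q "Suc i" for i] assms by (auto simp: qpoch_def)
  then show "qpoch_inf q q \<noteq> 0"
    unfolding qpoch_inf_def by (rule prodinf_nonzero[OF c])
qed

lemma qpoch_lower:
  fixes q :: complex assumes r: "norm q < 1"
  obtains P where "P > 0" "\<And>m. P \<le> norm (qpoch q q m)" "\<And>m. P \<le> norm (qpoch (-q) q m)"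
proof -
  let ?r = "norm q"
  let ?f = "\<lambda>j. 1 - ?r^Suc j"
  define P where "P = prodinf ?f"
  have c: "convergent_prod ?f" by (rule conv_prod_real) (use r in auto)
  have lim: "(\<lambda>n. \<Prod>i\<le>n. ?f i) \<longlonglongrightarrow> P" unfolding P_def by (rule convergent_prod_LIMSEQ[OF c])
  have fpos: "\<And>j. 0 < ?f j"
  proof -
    fix j show "0 < ?f j" using power_less_one_iff[of ?r "Suc j"] r by simp
  qed
  have fnn: "\<And>j. 0 \<le> 1 - ?r * ?r^j" using fpos by (simp add: less_imp_le)
  have fle1: "\<And>j. ?f j \<le> 1" by simp
  have dec: "decseq (\<lambda>n. \<Prod>i\<le>n. ?f i)"
  proof (rule decseq_SucI)
    fix n
    have "(\<Prod>i\<le>Suc n. ?f i) = (\<Prod>i\<le>n. ?f i) * ?f (Suc n)" by simp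
    also have "\<dots> \<le> (\<Prod>i\<le>n. ?f i)"
      using fle1[of "Suc n"] by (intro mult_left_le) (auto intro!: prod_nonneg fnn)
    finally show "(\<Prod>i\<le>Suc n. ?f i) \<le> (\<Prod>i\<le>n. ?f i)" .
  qed
  have Pn: "\<And>n. P \<le> (\<Prod>i\<le>n. ?f i)" by (rule decseq_ge[OF dec lim])
  have P0: "P \<noteq> 0" unfolding P_def by (rule prodinf_nonzero[OF c]) (use fpos in \<open>auto simp: less_le\<close>)
  have "P \<ge> 0" using lim by (rule LIMSEQ_le_const) (auto intro!: prod_nonneg fnn)
  hence Ppos: "P > 0" using P0 by simp
  have Pm: "P \<le> (\<Prod>j<m. ?f j)" for m
  proof -
    have "P \<le> (\<Prod>i\<le>m. ?f i)" by (rule Pn)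
    also have "\<dots> = (\<Prod>j<m. ?f j) * ?f m" by (simp add: lessThan_Suc_atMost[symmetric])
    also have "\<dots> \<le> (\<Prod>j<m. ?f j)"
      using fle1[of m] by (intro mult_left_le) (auto intro!: prod_nonneg fnn)
    finally show ?thesis .
  qed
  have low: "(\<Prod>j<m. ?f j) \<le> norm (qpoch a q m)" if a: "norm a = ?r" for a m
  proof -
    have "norm (qpoch a q m) = (\<Prod>j<m. norm (1 - a * q^j))"
      unfolding qpoch_def by (simp add: prod_norm)
    moreover have "(\<Prod>j<m. ?f j) \<le> (\<Prod>j<m. norm (1 - a * q^j))"
    proof (rule prod_mono)
      fix j assume "j \<in> {..<m}"
      have "1 - norm (a * q^j) \<le> norm (1 - a * q^j)" using norm_triangle_ineq2[of 1 "a*q^j"] by simp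
      moreover have "norm (a * q^j) = ?r^Suc j" using a by (simp add: norm_mult norm_power)
      ultimately show "0 \<le> ?f j \<and> ?f j \<le> norm (1 - a * q^j)" using fpos[of j] by simp
    qed
    ultimately show ?thesis by simp
  qed
  show ?thesis
  proof (rule that[OF Ppos])
    fix m
    show "P \<le> norm (qpoch q q m)" using Pm[of m] low[of q m] by simp
    show "P \<le> norm (qpoch (-q) q m)" using Pm[of m] low[of "-q" m] by simp
  qed
qed

lemma onep_lower:
  fixes q :: complex assumes "norm q < 1"
  shows "1 - norm q \<le> norm (1 + q^m)"
proof (cases m)
  case 0
  have "- 1 \<le> norm q" using norm_ge_zero[of q] by linarith
  then show ?thesis using 0 by simp
next
  case (Suc k)
  have "norm q ^ m \<le> norm q" using Suc assms by (simp add: power_le_one mult_left_le)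
  moreover have "1 - norm (q^m) \<le> norm (1 + q^m)" using norm_diff_ineq[of 1 "q^m"] by simp
  ultimately show ?thesis by (simp add: norm_power)
qed

lemma infsum_nat_eq_suminf:
  fixes f :: "nat \<Rightarrow> 'a::banach"
  assumes "summable (\<lambda>n. norm (f n))"
  shows "infsum f UNIV = suminf f" and "f summable_on UNIV"
proof -
  have "f sums suminf f" using summable_norm_cancel[OF assms] by (simp add: summable_sums)
  hence "(f has_sum suminf f) UNIV" by (rule norm_summable_imp_has_sum[OF assms])
  thus "infsum f UNIV = suminf f" "f summable_on UNIV" by (auto simp: infsumI summable_on_def)
qed


definition dt :: "complex \<Rightarrow> nat \<Rightarrow> nat \<Rightarrow> complex" where
  "dt q b s = q^(s * s + s * b) / (qpoch q q s * qpoch q q (s+b))"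

definition DS :: "complex \<Rightarrow> nat \<Rightarrow> complex" where
  "DS q b = suminf (dt q b)"

lemma alg_dt:
  fixes E X Z u v :: complex
  assumes "X \<noteq> 0" "Z \<noteq> 0" "1 - u \<noteq> 0" "1 - u * v \<noteq> 0"
  shows "E / (X * (1-u) * Z) - (1-v) * (E * u / (X * (1-u) * (Z * (1-u * v)))) = E / (X * (Z * (1-u * v)))"
  using assms by (simp add: divide_simps) (simp add: algebra_simps)

context
  fixes q :: complex assumes r: "norm q < 1"
begin

lemma nzq: "qpoch q q m \<noteq> 0" by (rule qpoch_nz) (use r in auto)

lemma fac1: "1 - q^Suc m \<noteq> 0"
  using nzq[of "Suc m"] by (auto simp: qpoch_qq_Suc)

lemma dt0: "dt q b 0 = (1 - q^Suc b) * dt q (Suc b) 0"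
  unfolding dt_def using nzq[of b] fac1[of b] by (simp add: qpoch_qq_Suc field_simps)

lemma dt_rec: "dt q b (Suc s) - (1 - q^Suc b) * dt q (Suc b) (Suc s) = q^Suc b * dt q (Suc (Suc b)) s"
proof -
  define E where "E = q^(s * s + s * b + 2 *  s + 1 + b)"
  define X where "X = qpoch q q s"
  define Z where "Z = qpoch q q (s+b+1)"
  define u where "u = q^Suc s"
  define v where "v = q^Suc b"
  have uv: "u * v = q^(s+b+2)" unfolding u_def v_def by (simp flip: power_add)
  have h1: "dt q b (Suc s) = E / (X * (1-u) * Z)"
  proof -
    have "Suc s * Suc s + Suc s * b = s * s + s * b + 2 * s + 1 + b" by (simp add: algebra_simps)
    moreover have "Suc s + b = Suc (s + b)" by simp
    ultimately show ?thesis unfolding dt_def E_def X_def Z_def u_def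
      by (simp only: qpoch_qq_Suc) (simp add: qpoch_qq_Suc)
  qed
  have h2: "dt q (Suc b) (Suc s) = E * u / (X * (1-u) * (Z * (1-u * v)))"
  proof -
    have "Suc s * Suc s + Suc s * Suc b = (s * s + s * b + 2 *  s + 1 + b) + Suc s" by (simp add: algebra_simps)
    hence "q^(Suc s * Suc s + Suc s * Suc b) = E * u" unfolding E_def u_def by (simp only: power_add)
    moreover have "qpoch q q (Suc s + Suc b) = Z * (1 - u * v)"
      unfolding Z_def uv by (simp add: qpoch_qq_Suc)
    ultimately show ?thesis unfolding dt_def X_def u_def by (simp add: qpoch_qq_Suc mult.assoc)
  qed
  have h3: "q^Suc b * dt q (Suc (Suc b)) s = E / (X * (Z * (1-u * v)))"
  proof -
    have "Suc b + (s * s + s * Suc (Suc b)) = s * s + s * b + 2 *  s + 1 + b" by (simp add: algebra_simps)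
    hence "q^Suc b * q^(s * s + s * Suc (Suc b)) = E" unfolding E_def by (simp only: power_add[symmetric])
    moreover have "qpoch q q (s + Suc (Suc b)) = Z * (1 - u * v)"
      unfolding Z_def uv by (simp add: qpoch_qq_Suc)
    ultimately show ?thesis unfolding dt_def X_def by (simp add: mult.assoc[symmetric])
  qed
  have X0: "X \<noteq> 0" "Z \<noteq> 0" using nzq by (auto simp: X_def Z_def)
  have u1: "1 - u \<noteq> 0" using fac1 by (simp add: u_def)
  have uv1: "1 - u * v \<noteq> 0" using fac1[of "s+b+1"] by (simp add: uv)
  show ?thesis unfolding h1 h2 h3 unfolding v_def[symmetric] by (rule alg_dt[OF X0 u1 uv1])
qed

end


context
  fixes q :: complex assumes r: "norm q < 1"
begin

lemma dt_bound: obtains C where "C > 0" "\<And>b s. norm (dt q b s) \<le> C * norm q ^ (s * s + s * b)"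
proof -
  obtain P where P: "P > 0" "\<And>m. P \<le> norm (qpoch q q m)" "\<And>m. P \<le> norm (qpoch (-q) q m)"
    using qpoch_lower[OF r] by blast
  show ?thesis
  proof (rule that[of "1/(P * P)"])
    show "1/(P * P) > 0" using P by simp
    fix b s
    have "P * P \<le> norm (qpoch q q s) * norm (qpoch q q (s+b))"
      using P by (intro mult_mono) auto
    moreover have "0 < norm (qpoch q q s) * norm (qpoch q q (s+b))"
      using P by (meson less_le_trans mult_pos_pos)
    ultimately have "norm q ^ (s * s + s * b) / (norm (qpoch q q s) * norm (qpoch q q (s+b))) \<le> norm q ^ (s * s + s * b) / (P * P)"
      using P by (intro divide_left_mono) auto
    thus "norm (dt q b s) \<le> 1/(P * P) * norm q ^ (s * s + s * b)"
      unfolding dt_def by (simp add: norm_divide norm_mult norm_power)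
  qed
qed

lemma pow_mono_r: "m \<le> n \<Longrightarrow> norm q ^ n \<le> norm q ^ m"
  using r by (intro power_decreasing) auto

lemma dt_summable: "summable (\<lambda>s. norm (dt q b s))"
proof -
  obtain C where C: "C > 0" "\<And>b s. norm (dt q b s) \<le> C * norm q ^ (s * s + s * b)" using dt_bound by blast
  show ?thesis
  proof (rule summable_comparison_test')
    show "summable (\<lambda>s. C * norm q ^ s)" using r by (simp add: summable_mult)
    fix s :: nat
    have "norm q ^ (s * s + s * b) \<le> norm q ^ s"
      by (rule pow_mono_r) (cases s, auto)
    hence "C * norm q ^ (s * s + s * b) \<le> C * norm q ^ s" using C(1) by (intro mult_left_mono) auto
    thus "norm (norm (dt q b s)) \<le> C * norm q ^ s" using C(2)[of b s] by simp
  qed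
qed

lemma DS_rec: "DS q b - (1 - q^Suc b) * DS q (Suc b) = q^Suc b * DS q (Suc (Suc b))"
proof -
  have s1: "summable (dt q b)" "summable (dt q (Suc b))" "summable (dt q (Suc (Suc b)))"
    by (rule summable_norm_cancel[OF dt_summable])+
  define f where "f s = dt q b s - (1 - q^Suc b) * dt q (Suc b) s" for s
  have sf: "summable f" unfolding f_def using s1 by (intro summable_diff summable_mult)
  have "suminf f = DS q b - (1 - q^Suc b) * DS q (Suc b)"
    unfolding f_def DS_def suminf_diff[OF s1(1) summable_mult[OF s1(2)], symmetric] suminf_mult[OF s1(2)] ..
  moreover have "suminf f = (\<Sum>s. f (Suc s)) + f 0"
    using suminf_split_head[OF sf] by simp
  moreover have "f 0 = 0" unfolding f_def by (subst dt0[OF r]) simp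
  moreover have "(\<Sum>s. f (Suc s)) = q^Suc b * DS q (Suc (Suc b))"
    unfolding f_def dt_rec[OF r] DS_def using s1 by (simp add: suminf_mult)
  ultimately show ?thesis by simp
qed

lemma DS_diff: "norm (DS q b - DS q (Suc b)) \<le> norm (DS q (Suc b) - DS q (Suc (Suc b)))"
proof -
  have "DS q b - DS q (Suc b) = q^Suc b * (DS q (Suc (Suc b)) - DS q (Suc b))"
    using DS_rec[of b] by (simp add: algebra_simps)
  hence "norm (DS q b - DS q (Suc b)) = norm q ^ Suc b * norm (DS q (Suc b) - DS q (Suc (Suc b)))"
    by (simp add: norm_mult norm_power norm_minus_commute)
  also have "\<dots> \<le> 1 * norm (DS q (Suc b) - DS q (Suc (Suc b)))"
  proof (rule mult_right_mono)
    show "norm q ^ Suc b \<le> 1" by (rule power_le_one) (use r in auto)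
  qed simp
  finally show ?thesis by simp
qed

lemma DS_tail: obtains C where "\<And>b. norm (DS q b - 1 / qpoch q q b) \<le> C * norm q ^ b"
proof -
  obtain C where C: "C > 0" "\<And>b s. norm (dt q b s) \<le> C * norm q ^ (s * s + s * b)" using dt_bound by blast
  have "norm (DS q b - 1 / qpoch q q b) \<le> (C / (1 - norm q)) * norm q ^ b" for b
  proof -
    have s1: "summable (dt q b)" by (rule summable_norm_cancel[OF dt_summable])
    have sn: "summable (\<lambda>s. norm (dt q b (Suc s)))"
      using dt_summable[of b] by (subst summable_Suc_iff)
    have "DS q b - 1 / qpoch q q b = (\<Sum>s. dt q b (Suc s))"
      using suminf_split_head[OF s1] unfolding DS_def by (simp add: dt_def)
    hence "norm (DS q b - 1 / qpoch q q b) \<le> (\<Sum>s. norm (dt q b (Suc s)))"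
      using summable_norm[OF sn] by simp
    also have "\<dots> \<le> (\<Sum>s. C * norm q ^ b * norm q ^ s)"
    proof (rule suminf_le[OF _ sn])
      show "summable (\<lambda>s. C * norm q ^ b * norm q ^ s)" using r by (simp add: summable_mult)
      fix s
      have "norm q ^ (Suc s * Suc s + Suc s * b) \<le> norm q ^ (b + s)"
        by (rule pow_mono_r) (simp add: algebra_simps)
      hence "C * norm q ^ (Suc s * Suc s + Suc s * b) \<le> C * norm q ^ (b + s)" using C(1) by (intro mult_left_mono) auto
      thus "norm (dt q b (Suc s)) \<le> C * norm q ^ b * norm q ^ s"
        using C(2)[of b "Suc s"] by (simp add: power_add mult.assoc)
    qed
    also have "\<dots> = C * norm q ^ b * (1 / (1 - norm q))"
      using r by (simp add: suminf_mult suminf_geometric)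
    finally show ?thesis by simp
  qed
  thus ?thesis by (rule that)
qed

lemma DS_lim: "(\<lambda>b. DS q b) \<longlonglongrightarrow> 1 / qpoch_inf q q"
proof -
  obtain C where C: "\<And>b. norm (DS q b - 1 / qpoch q q b) \<le> C * norm q ^ b" using DS_tail by blast
  have l1: "(\<lambda>b. 1 / qpoch q q b) \<longlonglongrightarrow> 1 / qpoch_inf q q"
    using qpoch_lim[OF r] by (intro tendsto_divide tendsto_const) auto
  have g: "(\<lambda>b. C * norm q ^ b) \<longlonglongrightarrow> 0"
  proof -
    have "(\<lambda>b. norm q ^ b) \<longlonglongrightarrow> 0" using r by (intro LIMSEQ_power_zero) simp
    from tendsto_mult[OF tendsto_const this, of C] show ?thesis by simp
  qed
  have l2: "(\<lambda>b. DS q b - 1 / qpoch q q b) \<longlonglongrightarrow> 0"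
    by (rule Lim_null_comparison[OF always_eventually g]) (use C in blast)
  have "(\<lambda>b. 1 / qpoch q q b + (DS q b - 1 / qpoch q q b)) \<longlonglongrightarrow> 1 / qpoch_inf q q + 0"
    by (rule tendsto_add[OF l1 l2])
  thus ?thesis by simp
qed

lemma DS_eq: "DS q b = 1 / qpoch_inf q q"
proof -
  have d0: "DS q b = DS q (Suc b)" for b
  proof -
    have "(\<lambda>k. norm (DS q (b+k) - DS q (Suc (b+k)))) \<longlonglongrightarrow> norm (1 / qpoch_inf q q - 1 / qpoch_inf q q)"
    proof -
      have a: "(\<lambda>k. DS q (k + b)) \<longlonglongrightarrow> 1 / qpoch_inf q q" by (rule LIMSEQ_ignore_initial_segment[OF DS_lim])
      have c: "(\<lambda>k. DS q (k + Suc b)) \<longlonglongrightarrow> 1 / qpoch_inf q q" by (rule LIMSEQ_ignore_initial_segment[OF DS_lim])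
      have "(\<lambda>k. norm (DS q (k + b) - DS q (k + Suc b))) \<longlonglongrightarrow> norm (1 / qpoch_inf q q - 1 / qpoch_inf q q)"
        by (rule tendsto_norm[OF tendsto_diff[OF a c]])
      thus ?thesis by (simp add: add.commute)
    qed
    moreover have "norm (DS q b - DS q (Suc b)) \<le> norm (DS q (b+k) - DS q (Suc (b+k)))" for k
    proof (induction k)
      case 0 then show ?case by simp
    next
      case (Suc k) then show ?case using DS_diff[of "b+k"] by simp
    qed
    ultimately have "norm (DS q b - DS q (Suc b)) \<le> 0"
      using LIMSEQ_le_const by fastforce
    thus ?thesis by simp
  qed
  have "DS q b = DS q 0" for b
  proof (induction b)
    case (Suc b) then show ?case using d0[of b] by simp
  qed simp
  hence "(\<lambda>b. DS q b) = (\<lambda>b. DS q 0)" by (intro ext)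
  hence "(\<lambda>b. DS q 0) \<longlonglongrightarrow> 1 / qpoch_inf q q" using DS_lim by metis
  hence "DS q 0 = 1 / qpoch_inf q q" by (rule LIMSEQ_unique[OF tendsto_const])
  thus ?thesis using \<open>\<And>b. DS q b = DS q 0\<close> by metis
qed

end


definition AA :: "complex \<Rightarrow> nat \<Rightarrow> complex" where
  "AA q k = (-1)^k * q^tri k * wq q k"
definition BB :: "complex \<Rightarrow> nat \<Rightarrow> nat \<Rightarrow> complex" where
  "BB q n k = q^(n * (n+1)) / (qpoch q q (n-k) * qpoch q q (n+k+1))"
definition gg :: "complex \<Rightarrow> nat \<Rightarrow> nat \<Rightarrow> complex" where
  "gg q n k = (if k \<le> n then AA q k * BB q n k else 0)"

lemma PF_all:
  fixes q :: complex assumes r: "norm q < 1"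
  shows "(\<Sum>k\<le>n. (-1)^k * q^tri k * wq q k / (qpoch q q (n-k) * qpoch q q (n+k+1)))
       = 1 / (2 * qpoch (-q) q n * qpoch (-q) q (Suc n))"
proof (cases "q = 0")
  case False then show ?thesis using PF[OF r] by blast
next
  case True
  have qp: "qpoch 0 0 m = 1" for m by (simp add: qpoch_def)
  have t: "(0::complex) ^ tri (Suc i) = 0" for i by (simp add: tri_Suc)
  show ?thesis unfolding True
    by (subst sum.atMost_shift) (simp add: qp wq_def t)
qed

context
  fixes q :: complex assumes r: "norm q < 1"
begin

lemma T_eq: "q^(n\<^sup>2 + n) / ((qpoch (-q) q n)\<^sup>2 * (1 + q^(n+1))) = 2 * (\<Sum>k\<le>n. gg q n k)"
proof -
  have "(\<Sum>k\<le>n. gg q n k) = (\<Sum>k\<le>n. q^(n * (n+1)) * ((-1)^k * q^tri k * wq q k / (qpoch q q (n-k) * qpoch q q (n+k+1))))"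
    by (rule sum.cong) (auto simp: gg_def AA_def BB_def)
  also have "\<dots> = q^(n * (n+1)) * (\<Sum>k\<le>n. (-1)^k * q^tri k * wq q k / (qpoch q q (n-k) * qpoch q q (n+k+1)))"
    by (rule sum_distrib_left[symmetric])
  also have "\<dots> = q^(n * (n+1)) * (1 / (2 * qpoch (-q) q n * qpoch (-q) q (Suc n)))"
    unfolding PF_all[OF r] ..
  finally have S: "(\<Sum>k\<le>n. gg q n k) = q^(n * (n+1)) * (1 / (2 * qpoch (-q) q n * qpoch (-q) q (Suc n)))" .
  have e1: "qpoch (-q) q (Suc n) = qpoch (-q) q n * (1 + q^(n+1))"
    by (simp add: qpoch_Suc)
  have e2: "n\<^sup>2 + n = n * (n+1)" by (simp add: power2_eq_square algebra_simps)
  have e3: "(qpoch (-q) q n)\<^sup>2 * (1 + q^(n+1)) = qpoch (-q) q n * qpoch (-q) q (Suc n)"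
    unfolding e1 by (simp add: power2_eq_square)
  show ?thesis unfolding S e2 e3 by simp
qed

lemma AA_bound: "norm (AA q k) \<le> 2 / (1 - norm q)\<^sup>2"
proof -
  have r0: "0 < 1 - norm q" using r by simp
  have n1: "norm (1 - q^(2*k+1)) \<le> 2"
  proof -
    have "norm (1 - q^(2*k+1)) \<le> 1 + norm (q^(2*k+1))" using norm_triangle_ineq4[of 1 "q^(2*k+1)"] by simp
    moreover have "norm (q^(2*k+1)) \<le> 1" unfolding norm_power by (rule power_le_one) (use r in auto)
    ultimately show ?thesis by simp
  qed
  have d: "(1 - norm q)\<^sup>2 \<le> norm (1 + q^k) * norm (1 + q^(k+1))"
    unfolding power2_eq_square using onep_lower[OF r, of k] onep_lower[OF r, of "k+1"] r0
    by (intro mult_mono) auto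
  have "norm (wq q k) = norm (1 - q^(2*k+1)) / (norm (1 + q^k) * norm (1 + q^(k+1)))"
    unfolding wq_def by (simp add: norm_divide norm_mult)
  also have "\<dots> \<le> 2 / (1 - norm q)\<^sup>2"
    using n1 d r0 by (intro frac_le) auto
  finally have w: "norm (wq q k) \<le> 2 / (1 - norm q)\<^sup>2" .
  have "norm ((-1::complex)^k * q^tri k) \<le> 1"
    unfolding norm_mult norm_power by (simp, rule power_le_one) (use r in auto)
  hence "norm (AA q k) \<le> 1 * (2 / (1 - norm q)\<^sup>2)"
    unfolding AA_def norm_mult[of "(-1)^k * q^tri k"] using w by (intro mult_mono) auto
  thus ?thesis by simp
qed

lemma gg_bound: obtains K where "K > 0" "\<And>n k. norm (gg q n k) \<le> K * (norm q ^ n * norm q ^ k)"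
proof -
  obtain P where P: "P > 0" "\<And>m. P \<le> norm (qpoch q q m)" "\<And>m. P \<le> norm (qpoch (-q) q m)"
    using qpoch_lower[OF r] by blast
  define K where "K = 2 / (1 - norm q)\<^sup>2 / (P * P)"
  have r0: "0 < 1 - norm q" using r by simp
  have K0: "K > 0" unfolding K_def using P r0 by simp
  have "norm (gg q n k) \<le> K * (norm q ^ n * norm q ^ k)" for n k
  proof (cases "k \<le> n")
    case False then show ?thesis using K0 by (simp add: gg_def)
  next
    case True
    have pp: "P * P \<le> norm (qpoch q q (n-k)) * norm (qpoch q q (n+k+1))"
      using P by (intro mult_mono) auto
    have ppos: "0 < norm (qpoch q q (n-k)) * norm (qpoch q q (n+k+1))"
      using P by (meson less_le_trans mult_pos_pos)
    have e: "norm q ^ (n * (n+1)) \<le> norm q ^ n * norm q ^ k"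
    proof -
      have "n + k \<le> n * (n+1)" using True by (cases n) auto
      hence "norm q ^ (n * (n+1)) \<le> norm q ^ (n+k)" using r by (intro power_decreasing) auto
      thus ?thesis by (simp add: power_add)
    qed
    have "norm (BB q n k) = norm q ^ (n * (n+1)) / (norm (qpoch q q (n-k)) * norm (qpoch q q (n+k+1)))"
      unfolding BB_def by (simp add: norm_divide norm_mult norm_power)
    also have "\<dots> \<le> norm q ^ (n * (n+1)) / (P * P)"
      using pp ppos P by (intro divide_left_mono) auto
    also have "\<dots> \<le> (norm q ^ n * norm q ^ k) / (P * P)"
      using e P by (intro divide_right_mono) auto
    finally have b: "norm (BB q n k) \<le> (norm q ^ n * norm q ^ k) / (P * P)" .
    have "norm (gg q n k) = norm (AA q k) * norm (BB q n k)" using True by (simp add: gg_def norm_mult)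
    also have "\<dots> \<le> (2 / (1 - norm q)\<^sup>2) * ((norm q ^ n * norm q ^ k) / (P * P))"
      using AA_bound b by (intro mult_mono) auto
    finally show ?thesis unfolding K_def by simp
  qed
  thus ?thesis using that K0 by blast
qed

end


context
  fixes q :: complex assumes r: "norm q < 1"
begin

lemma geo_part: "(\<Sum>k\<le>n. norm q ^ k) \<le> 1 / (1 - norm q)"
proof -
  have "(\<Sum>k\<le>n. norm q ^ k) \<le> (\<Sum>k. norm q ^ k)"
    using r by (intro sum_le_suminf) auto
  thus ?thesis using r by (simp add: suminf_geometric)
qed

lemma gg_row_summable: "summable (\<lambda>k. norm (gg q n k))"
proof -
  obtain K where K: "K > 0" "\<And>n k. norm (gg q n k) \<le> K * (norm q ^ n * norm q ^ k)" using gg_bound[OF r] by blast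
  show ?thesis
    by (rule summable_comparison_test'[of "\<lambda>k. K * norm q ^ n * norm q ^ k" 0])
       (use r K in \<open>auto simp: summable_mult mult.assoc\<close>)
qed

lemma gg_col_summable: "summable (\<lambda>n. norm (gg q n k))"
proof -
  obtain K where K: "K > 0" "\<And>n k. norm (gg q n k) \<le> K * (norm q ^ n * norm q ^ k)" using gg_bound[OF r] by blast
  show ?thesis
    by (rule summable_comparison_test'[of "\<lambda>n. K * norm q ^ k * norm q ^ n" 0])
       (use r K in \<open>auto simp: summable_mult summable_mult2 mult_ac\<close>)
qed

lemma row_bound: obtains K where "\<And>n. norm (\<Sum>k\<le>n. gg q n k) \<le> K * norm q ^ n"
    "\<And>n. (\<Sum>k. norm (gg q n k)) \<le> K * norm q ^ n"
proof -
  obtain K where K: "K > 0" "\<And>n k. norm (gg q n k) \<le> K * (norm q ^ n * norm q ^ k)" using gg_bound[OF r] by blast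
  have r0: "0 < 1 - norm q" using r by simp
  have a: "norm (\<Sum>k\<le>n. gg q n k) \<le> K / (1 - norm q) * norm q ^ n" for n
  proof -
    have "norm (\<Sum>k\<le>n. gg q n k) \<le> (\<Sum>k\<le>n. norm (gg q n k))" by (rule norm_sum)
    also have "\<dots> \<le> (\<Sum>k\<le>n. K * norm q ^ n * norm q ^ k)"
      using K(2) by (intro sum_mono) (simp add: mult.assoc)
    also have "\<dots> = K * norm q ^ n * (\<Sum>k\<le>n. norm q ^ k)" by (simp add: sum_distrib_left)
    also have "\<dots> \<le> K * norm q ^ n * (1 / (1 - norm q))"
      using geo_part K(1) by (intro mult_left_mono) auto
    finally show ?thesis by simp
  qed
  have b: "(\<Sum>k. norm (gg q n k)) \<le> K / (1 - norm q) * norm q ^ n" for n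
  proof -
    have "(\<Sum>k. norm (gg q n k)) \<le> (\<Sum>k. K * norm q ^ n * norm q ^ k)"
      using K(2) gg_row_summable r by (intro suminf_le) (auto simp: summable_mult mult.assoc)
    also have "\<dots> = K * norm q ^ n * (1 / (1 - norm q))"
      using r by (simp add: suminf_mult suminf_geometric)
    finally show ?thesis by simp
  qed
  show ?thesis by (rule that[OF a b])
qed

lemma row_infsum: "infsum (\<lambda>k. gg q n k) UNIV = (\<Sum>k\<le>n. gg q n k)"
proof -
  have "infsum (\<lambda>k. gg q n k) UNIV = infsum (\<lambda>k. gg q n k) {..n}"
    by (rule infsum_cong_neutral) (auto simp: gg_def)
  thus ?thesis by simp
qed

lemma col_suminf: "suminf (\<lambda>n. gg q n k) = AA q k * q^(k * (k+1)) / qpoch_inf q q"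
proof -
  have s: "summable (\<lambda>n. gg q n k)" by (rule summable_norm_cancel[OF gg_col_summable])
  have sd: "summable (dt q (2*k+1))" by (rule summable_norm_cancel[OF dt_summable[OF r]])
  have "suminf (\<lambda>n. gg q n k) = (\<Sum>n. gg q (n+k) k) + (\<Sum>i<k. gg q i k)"
    by (rule suminf_split_initial_segment[OF s])
  also have "(\<Sum>i<k. gg q i k) = 0" by (simp add: gg_def)
  also have "(\<lambda>n. gg q (n+k) k) = (\<lambda>n. AA q k * q^(k * (k+1)) * dt q (2*k+1) n)"
  proof
    fix n
    have "(n+k) * (n+k+1) = n * n + n * (2*k+1) + k * (k+1)" by (simp add: algebra_simps)
    moreover have "qpoch q q (n + k + k + 1) = qpoch q q (n + (2*k+1))" by (simp add: mult_2 add.assoc)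
    ultimately show "gg q (n+k) k = AA q k * q^(k * (k+1)) * dt q (2*k+1) n"
      unfolding gg_def BB_def dt_def by (simp add: power_add mult_ac)
  qed
  also have "(\<Sum>n. AA q k * q^(k * (k+1)) * dt q (2*k+1) n) = AA q k * q^(k * (k+1)) * DS q (2*k+1)"
    unfolding DS_def by (rule suminf_mult[OF sd])
  finally show ?thesis using DS_eq[OF r] by simp
qed

lemma gg_summable_pairs: "(\<lambda>(n,k). gg q n k) summable_on UNIV \<times> UNIV"
proof -
  obtain K where K: "\<And>n. norm (\<Sum>k\<le>n. gg q n k) \<le> K * norm q ^ n"
    "\<And>n. (\<Sum>k. norm (gg q n k)) \<le> K * norm q ^ n" using row_bound by blast
  have "(\<lambda>x. norm ((\<lambda>(n,k). gg q n k) x)) summable_on Sigma UNIV (\<lambda>_. UNIV)"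
  proof (subst Infinite_Sum.abs_summable_on_Sigma_iff, intro conjI ballI)
    fix n :: nat
    show "(\<lambda>k. norm ((\<lambda>(n, k). gg q n k) (n, k))) summable_on UNIV"
      using gg_row_summable[of n] by (intro norm_summable_imp_summable_on) simp
  next
    have e: "infsum (\<lambda>k. norm ((\<lambda>(n, k). gg q n k) (n, k))) UNIV = (\<Sum>k. norm (gg q n k))" for n
      using infsum_nat_eq_suminf(1)[of "\<lambda>k. norm (gg q n k)"] gg_row_summable[of n] by simp
    have "summable (\<lambda>n. norm (norm (\<Sum>k. norm (gg q n k))))"
    proof (rule summable_comparison_test'[of "\<lambda>n. K * norm q ^ n" 0])
      show "summable (\<lambda>n. K * norm q ^ n)" using r by (simp add: summable_mult)
      fix n :: nat
      have "0 \<le> (\<Sum>k. norm (gg q n k))" by (rule suminf_nonneg[OF gg_row_summable]) simp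
      thus "norm (norm (norm (\<Sum>k. norm (gg q n k)))) \<le> K * norm q ^ n" using K(2)[of n] by simp
    qed
    thus "(\<lambda>n. norm (infsum (\<lambda>k. norm ((\<lambda>(n, k). gg q n k) (n, k))) UNIV)) summable_on UNIV"
      unfolding e by (intro norm_summable_imp_summable_on) simp
  qed
  thus ?thesis by (rule abs_summable_summable)
qed

lemma part1_aux: "(\<Sum>n. q^(n\<^sup>2 + n) / ((qpoch (-q) q n)\<^sup>2 * (1 + q^(n+1))))
    = 2 / qpoch_inf q q * (\<Sum>k. AA q k * q^(k * (k+1)))"
proof -
  obtain K where K: "\<And>n. norm (\<Sum>k\<le>n. gg q n k) \<le> K * norm q ^ n"
    "\<And>n. (\<Sum>k. norm (gg q n k)) \<le> K * norm q ^ n" using row_bound by blast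
  have sw: "infsum (\<lambda>n. infsum (\<lambda>k. gg q n k) UNIV) UNIV = infsum (\<lambda>k. infsum (\<lambda>n. gg q n k) UNIV) UNIV"
    by (rule infsum_swap_banach[OF gg_summable_pairs])
  have srow: "summable (\<lambda>n. norm (\<Sum>k\<le>n. gg q n k))"
    by (rule summable_comparison_test'[of "\<lambda>n. K * norm q ^ n" 0]) (use r K in \<open>auto simp: summable_mult\<close>)
  have L: "infsum (\<lambda>n. infsum (\<lambda>k. gg q n k) UNIV) UNIV = (\<Sum>n. \<Sum>k\<le>n. gg q n k)"
    unfolding row_infsum by (rule infsum_nat_eq_suminf(1)[OF srow])
  have scol: "summable (\<lambda>k. norm (AA q k * q^(k * (k+1)) / qpoch_inf q q))"
  proof (rule summable_comparison_test'[of "\<lambda>k. (2 / (1 - norm q)\<^sup>2 / norm (qpoch_inf q q)) * norm q ^ k" 0])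
    show "summable (\<lambda>k. (2 / (1 - norm q)\<^sup>2 / norm (qpoch_inf q q)) * norm q ^ k)"
      using r by (simp add: summable_mult)
    fix k :: nat
    have "norm q ^ (k * (k+1)) \<le> norm q ^ k" using r by (intro power_decreasing) auto
    hence h: "norm (AA q k) * norm q ^ (k * (k+1)) \<le> (2 / (1 - norm q)\<^sup>2) * norm q ^ k"
      using AA_bound[OF r, of k] by (intro mult_mono) auto
    have "norm (norm (AA q k * q^(k * (k+1)) / qpoch_inf q q)) = (norm (AA q k) * norm q ^ (k * (k+1))) / norm (qpoch_inf q q)"
      by (simp add: norm_mult norm_divide norm_power)
    also have "\<dots> \<le> ((2 / (1 - norm q)\<^sup>2) * norm q ^ k) / norm (qpoch_inf q q)"
      by (rule divide_right_mono[OF h]) simp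
    also have "\<dots> = (2 / (1 - norm q)\<^sup>2 / norm (qpoch_inf q q)) * norm q ^ k" by simp
    finally show "norm (norm (AA q k * q^(k * (k+1)) / qpoch_inf q q)) \<le> (2 / (1 - norm q)\<^sup>2 / norm (qpoch_inf q q)) * norm q ^ k" .
  qed
  have R: "infsum (\<lambda>k. infsum (\<lambda>n. gg q n k) UNIV) UNIV = (\<Sum>k. AA q k * q^(k * (k+1)) / qpoch_inf q q)"
  proof -
    have "infsum (\<lambda>n. gg q n k) UNIV = AA q k * q^(k * (k+1)) / qpoch_inf q q" for k
      using infsum_nat_eq_suminf(1)[OF gg_col_summable] col_suminf by simp
    hence "infsum (\<lambda>k. infsum (\<lambda>n. gg q n k) UNIV) UNIV = infsum (\<lambda>k. AA q k * q^(k * (k+1)) / qpoch_inf q q) UNIV"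
      by simp
    also have "\<dots> = (\<Sum>k. AA q k * q^(k * (k+1)) / qpoch_inf q q)" by (rule infsum_nat_eq_suminf(1)[OF scol])
    finally show ?thesis .
  qed
  have "(\<Sum>n. q^(n\<^sup>2 + n) / ((qpoch (-q) q n)\<^sup>2 * (1 + q^(n+1)))) = (\<Sum>n. 2 * (\<Sum>k\<le>n. gg q n k))"
    using T_eq[OF r] by simp
  also have "\<dots> = 2 * (\<Sum>n. \<Sum>k\<le>n. gg q n k)"
    by (rule suminf_mult[OF summable_norm_cancel[OF srow]])
  also have "(\<Sum>n. \<Sum>k\<le>n. gg q n k) = (\<Sum>k. AA q k * q^(k * (k+1)) / qpoch_inf q q)"
    using sw L R by simp
  also have "\<dots> = (\<Sum>k. AA q k * q^(k * (k+1))) / qpoch_inf q q"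
  proof (rule suminf_divide)
    have "summable (\<lambda>k. AA q k * q^(k * (k+1)) / qpoch_inf q q * qpoch_inf q q)"
      by (rule summable_mult2[OF summable_norm_cancel[OF scol]])
    thus "summable (\<lambda>k. AA q k * q^(k * (k+1)))" using qpoch_lim(2)[OF r] by simp
  qed
  finally show ?thesis by simp
qed

end


lemma div3: "3 * k * (k + 1) div 2 = tri k + k * (k + 1)"
proof -
  have "3 * k * (k + 1) = 2 * (k * (k+1)) + k * (k + 1)" by (simp add: algebra_simps)
  thus ?thesis unfolding tri_def by simp
qed

lemma div3_ge: "(k::nat) \<le> 3 * k * (k + 1) div 2"
proof -
  have "k \<le> k * (k+1)" by simp
  thus ?thesis using div3[of k] by simp
qed

context
  fixes q :: complex assumes r: "norm q < 1"
begin

lemma part1: "(\<Sum>n. q ^ (n\<^sup>2 + n) / ((qpoch (-q) q n)\<^sup>2 * (1 + q ^ (n + 1))))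
           = 2 / qpoch_inf q q *
             (\<Sum>n. (-1) ^ n * q ^ (3 * n * (n + 1) div 2) * (1 - q ^ (2 * n + 1))
                    / ((1 + q ^ n) * (1 + q ^ (n + 1))))"
proof -
  have "AA q k * q^(k * (k+1)) = (-1) ^ k * q ^ (3 * k * (k + 1) div 2) * (1 - q ^ (2 * k + 1))
                    / ((1 + q ^ k) * (1 + q ^ (k + 1)))" for k
    unfolding AA_def wq_def div3 by (simp add: power_add mult_ac)
  thus ?thesis using part1_aux[OF r] by simp
qed

definition fz :: "int \<Rightarrow> complex" where
  "fz n = (-1) powi n * q ^ nat (3 * n * (n + 1) div 2) / (1 + q powi n)"

lemma fz_pos: "fz (int k) = (-1)^k * q^(3 * k * (k + 1) div 2) / (1 + q^k)"
proof -
  have a: "3 * int k * (int k + 1) = int (3 * k * (k + 1))" by (simp add: algebra_simps)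
  have "3 * int k * (int k + 1) div 2 = int (3 * k * (k + 1) div 2)"
    by (simp only: a zdiv_int of_nat_numeral)
  thus ?thesis unfolding fz_def by simp
qed

lemma fz_neg: assumes q0: "q \<noteq> 0"
  shows "fz (- int k - 1) = - ((-1)^k * q^(3 * k * (k + 1) div 2) * q^(k+1) / (1 + q^(k+1)))"
proof -
  have e: "3 * (- int k - 1) * (- int k - 1 + 1) div 2 = int (3 * k * (k + 1) div 2)"
  proof -
    have "3 * (- int k - 1) * (- int k - 1 + 1) = int (3 * k * (k + 1))" by (simp add: algebra_simps)
    thus ?thesis by (simp only: zdiv_int of_nat_numeral)
  qed
  have p: "x powi (- int k - 1) = inverse (x^(k+1))" for x :: complex
  proof -
    have "- int k - 1 = - int (k+1)" by simp
    thus ?thesis by (simp only: power_int_minus power_int_of_nat)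
  qed
  have "1 + inverse (q^(k+1)) = (q^(k+1) + 1) / q^(k+1)" using q0 by (simp add: field_simps)
  moreover have "inverse ((-1::complex)^(k+1)) = - ((-1)^k)" by (simp add: power_inverse[symmetric])
  ultimately show ?thesis unfolding fz_def e p using q0
    by (simp add: divide_simps add.commute)
qed

end


lemma part2:
  fixes q :: complex assumes r: "norm q < 1" and q0: "q \<noteq> 0"
  shows "(\<Sum>\<^sub>\<infinity>n::int. (-1) powi n * q ^ nat (3 * n * (n + 1) div 2) / (1 + q powi n))
     = (\<Sum>n. (-1) ^ n * q ^ (3 * n * (n + 1) div 2) * (1 - q ^ (2 * n + 1))
                    / ((1 + q ^ n) * (1 + q ^ (n + 1))))"
proof -
  let ?f = "fz q"
  define a where "a k = ?f (int k)" for k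
  define b where "b k = ?f (- int k - 1)" for k
  define neg where "neg k = - int k - 1" for k
  have r0: "0 < 1 - norm q" using r by simp
  have pw: "norm q ^ m \<le> norm q ^ k" if "k \<le> m" for m k using r that by (intro power_decreasing) auto
  have ba: "norm (a k) \<le> 1 / (1 - norm q) * norm q ^ k" for k
  proof -
    have "norm (a k) = norm q ^ (3 * k * (k + 1) div 2) / norm (1 + q^k)"
      unfolding a_def fz_pos[OF r] by (simp add: norm_mult norm_divide norm_power)
    also have "\<dots> \<le> norm q ^ k / (1 - norm q)"
      using pw[OF div3_ge[of k]] onep_lower[OF r, of k] r0 by (intro frac_le) auto
    finally show ?thesis by simp
  qed
  have bb: "norm (b k) \<le> 1 / (1 - norm q) * norm q ^ k" for k
  proof -
    have "norm (b k) = norm q ^ (3 * k * (k + 1) div 2) * norm q ^ (k+1) / norm (1 + q^(k+1))"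
      unfolding b_def fz_neg[OF r q0] by (simp add: norm_mult norm_divide norm_power)
    also have "\<dots> \<le> 1 * norm q ^ k / (1 - norm q)"
    proof (intro frac_le mult_mono)
      show "norm q ^ (3 * k * (k + 1) div 2) \<le> 1" by (rule power_le_one) (use r in auto)
      show "norm q ^ (k+1) \<le> norm q ^ k" by (rule pw) simp
    qed (use onep_lower[OF r, of "k+1"] r0 in auto)
    finally show ?thesis by simp
  qed
  have sa: "summable (\<lambda>k. norm (a k))"
    by (rule summable_comparison_test'[of "\<lambda>k. 1 / (1 - norm q) * norm q ^ k" 0])
       (use r ba in \<open>auto simp: summable_mult\<close>)
  have sb: "summable (\<lambda>k. norm (b k))"
    by (rule summable_comparison_test'[of "\<lambda>k. 1 / (1 - norm q) * norm q ^ k" 0])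
       (use r bb in \<open>auto simp: summable_mult\<close>)
  have injn: "inj neg" unfolding neg_def inj_def by auto
  have U: "range int \<union> range neg = (UNIV :: int set)"
  proof (rule set_eqI, rule iffI)
    fix n :: int
    show "n \<in> range int \<union> range neg"
    proof (cases "n \<ge> 0")
      case True then show ?thesis by (auto intro: image_eqI[of _ _ "nat n"])
    next
      case False
      hence "n = neg (nat (- n - 1))" unfolding neg_def by simp
      thus ?thesis by blast
    qed
  qed simp
  have D: "range int \<inter> range neg = {}" unfolding neg_def by auto
  have ia: "infsum ?f (range int) = suminf a"
    by (subst infsum_reindex) (auto simp: o_def a_def[symmetric] infsum_nat_eq_suminf(1)[OF sa])
  have ib: "infsum ?f (range neg) = suminf b"
    by (subst infsum_reindex[OF injn]) (auto simp: o_def neg_def b_def[symmetric] infsum_nat_eq_suminf(1)[OF sb])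
  have suma: "?f summable_on range int"
    by (subst summable_on_reindex) (auto simp: o_def a_def[symmetric] infsum_nat_eq_suminf(2)[OF sa])
  have sumb: "?f summable_on range neg"
    by (subst summable_on_reindex[OF injn]) (auto simp: o_def neg_def b_def[symmetric] infsum_nat_eq_suminf(2)[OF sb])
  have "(\<Sum>\<^sub>\<infinity>n::int. (-1) powi n * q ^ nat (3 * n * (n + 1) div 2) / (1 + q powi n)) = infsum ?f UNIV"
  proof -
    have "fz q = (\<lambda>n::int. (-1) powi n * q ^ nat (3 * n * (n + 1) div 2) / (1 + q powi n))"
      by (rule ext) (simp only: fz_def[OF r])
    thus ?thesis by simp
  qed
  also have "\<dots> = infsum ?f (range int) + infsum ?f (range neg)"
    unfolding U[symmetric] by (rule infsum_Un_disjoint[OF suma sumb D])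
  also have "\<dots> = (\<Sum>k. a k + b k)"
    unfolding ia ib by (rule suminf_add[OF summable_norm_cancel[OF sa] summable_norm_cancel[OF sb]])
  also have "(\<lambda>k. a k + b k) = (\<lambda>n. (-1) ^ n * q ^ (3 * n * (n + 1) div 2) * (1 - q ^ (2 * n + 1))
                    / ((1 + q ^ n) * (1 + q ^ (n + 1))))"
  proof
    fix k
    have n1: "1 + q^k \<noteq> 0" "1 + q^(k+1) \<noteq> 0" by (rule onep_nz[OF r])+
    show "a k + b k = (-1) ^ k * q ^ (3 * k * (k + 1) div 2) * (1 - q ^ (2 * k + 1))
                    / ((1 + q ^ k) * (1 + q ^ (k + 1)))"
      unfolding a_def b_def fz_pos[OF r] fz_neg[OF r q0] using n1
      by (simp add: divide_simps) (simp add: algebra_simps power_add mult_2_right)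
  qed
  finally show ?thesis .
qed


theorem mainTheorem4:
  fixes q :: complex
  assumes "norm q < 1"
  shows "(\<Sum>n. q ^ (n\<^sup>2 + n) / ((qpoch (-q) q n)\<^sup>2 * (1 + q ^ (n + 1))))
           = 2 / qpoch_inf q q *
             (\<Sum>n. (-1) ^ n * q ^ (3 * n * (n + 1) div 2) * (1 - q ^ (2 * n + 1))
                    / ((1 + q ^ n) * (1 + q ^ (n + 1))))
       \<and> (q \<noteq> 0 \<longrightarrow> 2 / qpoch_inf q q *
             (\<Sum>n. (-1) ^ n * q ^ (3 * n * (n + 1) div 2) * (1 - q ^ (2 * n + 1))
                    / ((1 + q ^ n) * (1 + q ^ (n + 1))))
           = 2 / qpoch_inf q q *
             (\<Sum>\<^sub>\<infinity>n::int. (-1) powi n * q ^ nat (3 * n * (n + 1) div 2) / (1 + q powi n)))"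
proof (intro conjI impI)
  show "(\<Sum>n. q ^ (n\<^sup>2 + n) / ((qpoch (-q) q n)\<^sup>2 * (1 + q ^ (n + 1))))
           = 2 / qpoch_inf q q *
             (\<Sum>n. (-1) ^ n * q ^ (3 * n * (n + 1) div 2) * (1 - q ^ (2 * n + 1))
                    / ((1 + q ^ n) * (1 + q ^ (n + 1))))"
    by (rule part1[OF assms])
  assume q0: "q \<noteq> 0"
  show "2 / qpoch_inf q q *
             (\<Sum>n. (-1) ^ n * q ^ (3 * n * (n + 1) div 2) * (1 - q ^ (2 * n + 1))
                    / ((1 + q ^ n) * (1 + q ^ (n + 1))))
           = 2 / qpoch_inf q q *
             (\<Sum>\<^sub>\<infinity>n::int. (-1) powi n * q ^ nat (3 * n * (n + 1) div 2) / (1 + q powi n))"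
    using part2[OF assms q0] by simp
qed

end
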